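(* Under Strategy 2A (described in the context), let $U_h(\omega)$ be the number of uncles created during the attack cycle $\omega$ that are referred by nephew blocks mined by the honest miners, in $\omega$ or in a later cycle. Then $$\mathbb{E}[U_h]=p^2q+\bigl(p+(1-\gamma)p^2q\bigr)pq^2\cdot\frac{1-(pq)^{n_1-1}}{1-pq}.$$
   Context: Honest hashrate $p$, attacker hashrate $q$, $p+q=1$, $0<q<p$; $\gamma\in[0,1]$ is the fraction of honest hashrate mining on the attacker's block during a public competition between equal-height blocks. Attack cycles are i.i.d. words in S (attacker block) and H (honest block): H, SHS, SHH, or SSwH with $w$ a Dyck word; $\mathbb{P}[H]=p$, $\mathbb{P}[SHS]=pq^2$, $\mathbb{P}[SHH]=p^2q$, $\mathbb{P}[SSwH]=q^2p(pq)^{|w|}$ ($|w|$ half the length of $w$). In SHH the second honest block is built on the attacker's block with probability $\gamma$ and on the first honest block with probability $1-\gamma$. Ethereum rules: an uncle is a non-official block whose parent is official; a nephew (official block) may refer an uncle at distance (height difference) at most $n_1$ ($n_1\ge2$ an integer). Strategy 2A ("brutal fork"): the attacker keeps his whole fork secret and releases it all at once at the end of the attack cycle, when an honest block would reduce his advance to one block (after a single attacker block, he publishes it to compete with the honest block); the attacker's fork wins in cycles starting with SS; all miners refer all possible uncles. *)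

theory Defs
  imports "HOL-Probability.Probability"
begin

text \<open>Blocks: S = attacker block, H = honest block.\<close>
datatype letter = S | H

text \<open>An attack cycle: the word of blocks in mining order, together with a Boolean which
  is only meaningful for the cycle SHH: True iff the second honest block is built on the
  attacker's block (probability gamma), False iff built on the first honest block.\<close>
type_synonym cycle = "letter list \<times> bool"

definition dyck :: "letter list \<Rightarrow> bool" where
  "dyck v \<longleftrightarrow> length (filter (\<lambda>x. x = S) v) = length (filter (\<lambda>x. x = H) v) \<and>
     (\<forall>k \<le> length v. length (filter (\<lambda>x. x = H) (take k v)) \<le> length (filter (\<lambda>x. x = S) (take k v)))"

text \<open>Probability of a cycle (q is the attacker hashrate, p the honest one).\<close>
definition cycle_prob :: "real \<Rightarrow> real \<Rightarrow> real \<Rightarrow> cycle \<Rightarrow> real" where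
  "cycle_prob p q \<gamma> c =
     (if c = ([H], False) then p
      else if c = ([S,H,S], False) then p * q^2
      else if c = ([S,H,H], True) then p^2 * q * \<gamma>
      else if c = ([S,H,H], False) then p^2 * q * (1 - \<gamma>)
      else if (\<exists>v. dyck v \<and> fst c = [S,S] @ v @ [H]) \<and> \<not> snd c
        then q^2 * p * (p*q) ^ ((length (fst c) - 3) div 2)
      else 0)"

definition cycle_pmf :: "real \<Rightarrow> real \<Rightarrow> real \<Rightarrow> cycle pmf" where
  "cycle_pmf p q \<gamma> = embed_pmf (cycle_prob p q \<gamma>)"

text \<open>Structure of the blocks of one cycle (Strategy 2A).  Block j of the cycle is the
  j-th mined block.  Its height relative to the official tip at the start of the cycle.\<close>
definition rel_height :: "cycle \<Rightarrow> nat \<Rightarrow> nat" where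
  "rel_height c j = length (filter (\<lambda>x. x = fst c ! j) (take (Suc j) (fst c)))"

definition official_in :: "cycle \<Rightarrow> nat \<Rightarrow> bool" where
  "official_in c j =
     (if fst c = [H] then True
      else if fst c = [S,H,S] then j \<noteq> 1
      else if fst c = [S,H,H] then (if snd c then j \<noteq> 1 else j \<noteq> 0)
      else fst c ! j = S)"

text \<open>Parent of block j: None = the official tip at the start of the cycle,
  Some j' = block j' of the same cycle.\<close>
definition parent_in :: "cycle \<Rightarrow> nat \<Rightarrow> nat option" where
  "parent_in c j =
     (if rel_height c j = 1 then None
      else if fst c = [S,H,H] \<and> snd c \<and> j = 2 then Some 0
      else Some (GREATEST j'. j' < j \<and> fst c ! j' = fst c ! j))"

definition advance :: "cycle \<Rightarrow> nat" where
  "advance c = card {j. j < length (fst c) \<and> official_in c j}"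

text \<open>Blocks of a stream of cycles: (i, j) = j-th block of the i-th cycle.\<close>
type_synonym block = "nat \<times> nat"

definition is_block :: "cycle stream \<Rightarrow> block \<Rightarrow> bool" where
  "is_block s b \<longleftrightarrow> snd b < length (fst (s !! fst b))"

definition miner :: "cycle stream \<Rightarrow> block \<Rightarrow> letter" where
  "miner s b = fst (s !! fst b) ! snd b"

definition height :: "cycle stream \<Rightarrow> block \<Rightarrow> nat" where
  "height s b = (\<Sum>k < fst b. advance (s !! k)) + rel_height (s !! fst b) (snd b)"

definition official :: "cycle stream \<Rightarrow> block \<Rightarrow> bool" where
  "official s b \<longleftrightarrow> is_block s b \<and> official_in (s !! fst b) (snd b)"

definition mined_before :: "block \<Rightarrow> block \<Rightarrow> bool" where
  "mined_before b b' \<longleftrightarrow> fst b < fst b' \<or> (fst b = fst b' \<and> snd b < snd b')"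

definition is_uncle :: "cycle stream \<Rightarrow> block \<Rightarrow> bool" where
  "is_uncle s b \<longleftrightarrow> is_block s b \<and> \<not> official s b \<and>
     (case parent_in (s !! fst b) (snd b) of None \<Rightarrow> True
        | Some j' \<Rightarrow> official s (fst b, j'))"

definition can_refer :: "nat \<Rightarrow> cycle stream \<Rightarrow> block \<Rightarrow> block \<Rightarrow> bool" where
  "can_refer n1 s n u \<longleftrightarrow> official s n \<and> is_uncle s u \<and> mined_before u n \<and>
     height s u < height s n \<and> height s n \<le> height s u + n1"

text \<open>All miners refer all possible uncles, so an uncle is referred by the first (lowest)
  official block able to refer it.\<close>
definition referred_by_honest :: "nat \<Rightarrow> cycle stream \<Rightarrow> block \<Rightarrow> bool" where
  "referred_by_honest n1 s u \<longleftrightarrow>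
     (\<exists>n. can_refer n1 s n u \<and> miner s n = H \<and>
          (\<forall>n'. can_refer n1 s n' u \<longrightarrow> height s n \<le> height s n'))"

definition Uh :: "nat \<Rightarrow> cycle stream \<Rightarrow> nat" where
  "Uh n1 s = card {j. is_uncle s (0, j) \<and> referred_by_honest n1 s (0, j)}"

end

theory Submission
  imports Defs
begin
definition nS :: "letter list \<Rightarrow> nat" where "nS xs = length (filter (\<lambda>x. x = S) xs)"
definition nH :: "letter list \<Rightarrow> nat" where "nH xs = length (filter (\<lambda>x. x = H) xs)"

lemma nS_simps[simp]: "nS [] = 0" "nS (S # xs) = Suc (nS xs)" "nS (H # xs) = nS xs"
  "nS (xs @ ys) = nS xs + nS ys"
  by (auto simp: nS_def)
lemma nH_simps[simp]: "nH [] = 0" "nH (H # xs) = Suc (nH xs)" "nH (S # xs) = nH xs"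
  "nH (xs @ ys) = nH xs + nH ys"
  by (auto simp: nH_def)

lemma letter_cases: "x \<noteq> S \<longleftrightarrow> x = H" by (cases x) auto

lemma length_nS_nH: "length xs = nS xs + nH xs"
proof (induction xs)
  case (Cons a xs) then show ?case by (cases a) auto
qed simp

lemma dyck_alt: "dyck v \<longleftrightarrow> nS v = nH v \<and> (\<forall>k \<le> length v. nH (take k v) \<le> nS (take k v))"
  unfolding dyck_def nS_def nH_def ..

lemma dyck_Nil[simp]: "dyck []" by (simp add: dyck_alt)

lemma dyck_len: "dyck v \<Longrightarrow> length v = 2 * nS v"
  by (simp add: dyck_alt length_nS_nH)

lemma dyck_compose:
  assumes u: "dyck u" and v: "dyck v"
  shows "dyck (S # u @ H # v)"
  unfolding dyck_alt
proof (intro conjI allI impI)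
  show "nS (S # u @ H # v) = nH (S # u @ H # v)" using u v by (simp add: dyck_alt)
next
  fix k assume k: "k \<le> length (S # u @ H # v)"
  show "nH (take k (S # u @ H # v)) \<le> nS (take k (S # u @ H # v))"
  proof (cases k)
    case 0 then show ?thesis by simp
  next
    case (Suc k')
    show ?thesis
    proof (cases "k' \<le> length u")
      case True
      then have "nH (take k' u) \<le> nS (take k' u)" using u by (simp add: dyck_alt)
      then show ?thesis using True Suc by simp
    next
      case False
      then obtain k'' where k'': "k' = length u + Suc k''" by (metis add_Suc_right less_imp_Suc_add not_le)
      have "k'' \<le> length v" using k k'' Suc by simp
      then have "nH (take k'' v) \<le> nS (take k'' v)" using v by (simp add: dyck_alt)
      moreover have "nS u = nH u" using u by (simp add: dyck_alt)
      ultimately show ?thesis using Suc k'' by simp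
    qed
  qed
qed

lemma not_dyck_prefix:
  assumes "dyck (a' @ H # r)" "dyck a'" shows False
proof -
  have "nH (take (Suc (length a')) (a' @ H # r)) \<le> nS (take (Suc (length a')) (a' @ H # r))"
    using assms(1) unfolding dyck_alt by (metis Suc_le_mono length_Cons length_append_singleton le_add1 append_Cons append_assoc append_Nil length_append)
  moreover have "take (Suc (length a')) (a' @ H # r) = a' @ [H]" by simp
  ultimately show False using assms(2) by (simp add: dyck_alt)
qed

lemma decomp_inj:
  assumes u: "dyck u" and u': "dyck u'" and eq: "S # u @ H # v = S # u' @ H # v'"
  shows "u = u' \<and> v = v'"
proof -
  from eq have "u @ (H # v) = u' @ (H # v')" by simp
  then obtain us where "u = u' @ us \<and> us @ H # v = H # v' \<or> u @ us = u' \<and> H # v = us @ H # v'"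
    by (auto simp: append_eq_append_conv2)
  then show ?thesis
  proof
    assume A: "u = u' @ us \<and> us @ H # v = H # v'"
    show ?thesis
    proof (cases us)
      case Nil then show ?thesis using A by simp
    next
      case (Cons a r)
      with A have "u = u' @ H # r" by simp
      then show ?thesis using u u' not_dyck_prefix by blast
    qed
  next
    assume A: "u @ us = u' \<and> H # v = us @ H # v'"
    show ?thesis
    proof (cases us)
      case Nil then show ?thesis using A by simp
    next
      case (Cons a r)
      with A have "u' = u @ H # r" by (cases us) auto
      then show ?thesis using u u' not_dyck_prefix by blast
    qed
  qed
qed

lemma dyck_decomp:
  assumes w: "dyck w" and ne: "w \<noteq> []"
  shows "\<exists>u v. w = S # u @ H # v \<and> dyck u \<and> dyck v"
proof -
  define b where "b k = int (nS (take k w)) - int (nH (take k w))" for k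
  have bstep: "b (Suc k) = b k + (if w!k = S then 1 else -1)" if "k < length w" for k
    using that by (cases "w!k") (auto simp: b_def take_Suc_conv_app_nth)
  have bnn: "b k \<ge> 0" if "k \<le> length w" for k
    using w that by (auto simp: b_def dyck_alt)
  have blen: "b (length w) = 0" using w by (simp add: b_def dyck_alt)
  obtain c w' where cw: "w = c # w'" using ne by (cases w) auto
  have cS: "c = S"
  proof (rule ccontr)
    assume "c \<noteq> S" then have "c = H" by (cases c) auto
    then have "b 1 = -1" by (simp add: b_def cw)
    with bnn[of 1] cw show False by simp
  qed
  have b1: "b 1 = 1" by (simp add: b_def cw cS)
  define P where "P k \<longleftrightarrow> 0 < k \<and> k \<le> length w \<and> b k = 0" for k
  have Plen: "P (length w)" using blen ne by (simp add: P_def)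
  define i where "i = (LEAST k. P k)"
  have Pi: "P i" unfolding i_def by (rule LeastI[of P, OF Plen])
  have notP: "\<not> P k" if "k < i" for k using that unfolding i_def by (rule not_less_Least)
  have i2: "i \<ge> 2"
  proof -
    have "i \<noteq> 1" using Pi b1 by (auto simp: P_def)
    moreover have "i \<noteq> 0" using Pi by (auto simp: P_def)
    ultimately show ?thesis by simp
  qed
  define j where "j = i - 1"
  have ji: "i = Suc j" and j1: "j \<ge> 1" using i2 by (auto simp: j_def)
  have jlen: "j < length w" using Pi ji by (simp add: P_def)
  have bj_ne: "b j \<noteq> 0" using notP[of j] ji j1 jlen by (auto simp: P_def)
  have bj: "b j = 1" and wj: "w ! j = H"
  proof -
    have "b (Suc j) = 0" using Pi ji by (simp add: P_def)
    moreover have "b j \<ge> 0" using bnn jlen by simp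
    ultimately show "b j = 1" "w ! j = H" using bstep[OF jlen] bj_ne by (auto split: if_splits simp: letter_cases)
  qed
  define u where "u = take (j - 1) w'"
  define v where "v = drop j w'"
  have jw': "j - 1 < length w'" using jlen cw j1 by simp
  have w'j: "w' ! (j - 1) = H" using wj cw j1 by (cases j) auto
  have wdec: "w = S # u @ H # v"
  proof -
    have "w' = take (j - 1) w' @ w' ! (j - 1) # drop (Suc (j - 1)) w'"
      using jw' by (simp add: id_take_nth_drop)
    then show ?thesis using cw cS w'j j1 by (simp add: u_def v_def)
  qed
  have lu: "length u = j - 1" using jw' by (simp add: u_def)
  have bpre: "b (Suc k) = 1 + int (nS (take k u)) - int (nH (take k u))" if "k \<le> length u" for k
    using that by (simp add: b_def wdec)
  have du: "dyck u"
    unfolding dyck_alt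
  proof (intro conjI allI impI)
    have "b j = 1 + int (nS u) - int (nH u)" using bpre[of "length u"] lu j1 by simp
    then show "nS u = nH u" using bj by simp
  next
    fix k assume k: "k \<le> length u"
    have "b (Suc k) \<noteq> 0" using notP[of "Suc k"] k lu ji jlen j1 by (auto simp: P_def)
    moreover have "b (Suc k) \<ge> 0" using bnn[of "Suc k"] k lu jlen by simp
    ultimately show "nH (take k u) \<le> nS (take k u)" using bpre[OF k] by simp
  qed
  have nu: "nS u = nH u" using du by (simp add: dyck_alt)
  have bpost: "b (Suc (Suc (length u)) + k) = int (nS (take k v)) - int (nH (take k v))" for k
    using nu by (simp add: b_def wdec)
  have dv: "dyck v"
    unfolding dyck_alt
  proof (intro conjI allI impI)
    have "b (length w) = int (nS v) - int (nH v)" using bpost[of "length v"] by (simp add: wdec)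
    then show "nS v = nH v" using blen by simp
  next
    fix k assume k: "k \<le> length v"
    have "b (Suc (Suc (length u)) + k) \<ge> 0" using bnn k by (simp add: wdec)
    then show "nH (take k v) \<le> nS (take k v)" using bpost[of k] by simp
  qed
  show ?thesis using wdec du dv by blast
qed

lemma UNIV_letter: "(UNIV :: letter set) = {S, H}" by (auto intro: letter.exhaust)
lemma finite_UNIV_letter[simp]: "finite (UNIV :: letter set)" by (simp add: UNIV_letter)

definition T :: "nat \<Rightarrow> letter list set" where "T N = {v. dyck v \<and> length v \<le> 2 * N}"

lemma finite_T: "finite (T N)"
proof -
  have "T N \<subseteq> {xs. set xs \<subseteq> UNIV \<and> length xs \<le> 2 * N}" by (auto simp: T_def)
  moreover have "finite {xs. set xs \<subseteq> (UNIV :: letter set) \<and> length xs \<le> 2 * N}"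
    by (rule finite_lists_length_le) simp
  ultimately show ?thesis by (rule finite_subset)
qed

definition g :: "letter list \<times> letter list \<Rightarrow> letter list" where "g uv = S # fst uv @ H # snd uv"

lemma inj_g: "inj_on g ({v. dyck v} \<times> UNIV)"
  by (auto simp: inj_on_def g_def dest: decomp_inj)

lemma len_g: "dyck u \<Longrightarrow> dyck v \<Longrightarrow> length (S # u @ H # v) div 2 = Suc (length u div 2 + length v div 2)"
  by (auto dest!: dyck_len)

lemma len_add_div: "dyck u \<Longrightarrow> dyck v \<Longrightarrow> (length u + length v) div 2 = length u div 2 + length v div 2"
  by (auto dest!: dyck_len)

lemma T_Suc: "T (Suc N) \<subseteq> insert [] (g ` (T N \<times> T N))"
proof
  fix w assume w: "w \<in> T (Suc N)"
  show "w \<in> insert [] (g ` (T N \<times> T N))"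
  proof (cases "w = []")
    case False
    then obtain u v where "w = S # u @ H # v" "dyck u" "dyck v" using w dyck_decomp[of w] by (auto simp: T_def)
    then show ?thesis using w by (auto simp: T_def g_def image_iff)
  qed simp
qed

lemma trunc_bound:
  fixes p q :: real
  assumes p: "0 < p" and q: "0 < q" and pq: "p + q = 1"
  shows "(\<Sum>v\<in>T N. (p*q)^(length v div 2)) \<le> 1/p"
proof (induction N)
  case 0
  have "T 0 = {[]}" by (auto simp: T_def)
  then show ?case using p pq q by (simp add: field_simps)
next
  case (Suc N)
  let ?x = "p * q"
  let ?w = "\<lambda>v. ?x^(length v div 2)"
  define s where "s = (\<Sum>v\<in>T N. ?w v)"
  have s0: "0 \<le> s" unfolding s_def using p q by (intro sum_nonneg) simp
  have fin2: "finite (insert [] (g ` (T N \<times> T N)))" using finite_T by simp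
  have "(\<Sum>v\<in>T (Suc N). ?w v) \<le> (\<Sum>v\<in>insert [] (g ` (T N \<times> T N)). ?w v)"
    by (rule sum_mono2[OF fin2 T_Suc]) (use p q in simp)
  also have "\<dots> = 1 + (\<Sum>v\<in>g ` (T N \<times> T N). ?w v)"
    using finite_T by (subst sum.insert) (auto simp: g_def)
  also have "(\<Sum>v\<in>g ` (T N \<times> T N). ?w v) = (\<Sum>uv\<in>T N \<times> T N. ?w (g uv))"
    by (rule sum.reindex_cong[where l=g]) (rule inj_on_subset[OF inj_g], auto simp: T_def)
  also have "\<dots> = (\<Sum>uv\<in>T N \<times> T N. ?x * (?w (fst uv) * ?w (snd uv)))"
    by (rule sum.cong) (auto simp: T_def g_def len_add_div power_add)
  also have "\<dots> = ?x * (s * s)"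
  proof -
    have "(\<Sum>uv\<in>T N \<times> T N. ?w (fst uv) * ?w (snd uv)) = s * s"
      unfolding s_def sum_product sum.cartesian_product by (simp add: case_prod_beta)
    then show ?thesis by (simp add: sum_distrib_left[symmetric])
  qed
  also have "1 + ?x * (s * s) \<le> 1 + ?x * ((1/p) * (1/p))"
    using Suc.IH s0 p q by (intro add_left_mono mult_left_mono mult_mono) (auto simp: s_def)
  also have "\<dots> = 1/p" using p pq by (simp add: field_simps)
  finally show ?case .
qed

lemma dyck_sum:
  fixes p q :: real
  assumes q: "0 < q" and qp: "q < p" and pq: "p + q = 1"
  shows "(\<integral>\<^sup>+ v. ennreal ((p*q)^(length v div 2)) \<partial>count_space {v. dyck v}) = ennreal (1/p)"
proof -
  have p: "0 < p" using q qp by simp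
  define x where "x = p * q"
  have x0: "0 < x" using p q by (simp add: x_def)
  define w where "w v = ennreal (x^(length v div 2))" for v :: "letter list"
  define wi where "wi v = w v * indicator {v. dyck v} v" for v
  define D where "D = (\<integral>\<^sup>+ v. w v \<partial>count_space {v. dyck v})"
  have D_wi: "D = (\<integral>\<^sup>+ v. wi v \<partial>count_space UNIV)"
    unfolding D_def wi_def by (rule nn_integral_count_space_indicator) simp
  have Dle: "D \<le> ennreal (1/p)"
  proof -
    have sup: "wi v = (SUP N. w v * indicator (T N) v)" for v
    proof (rule antisym)
      show "(SUP N. w v * indicator (T N) v) \<le> wi v"
        by (rule SUP_least) (auto simp: wi_def T_def indicator_def)
      show "wi v \<le> (SUP N. w v * indicator (T N) v)"
      proof (cases "dyck v")
        case True
        then have "wi v = w v * indicator (T (length v)) v" by (simp add: wi_def T_def)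
        then show ?thesis by (metis SUP_upper UNIV_I)
      qed (simp add: wi_def)
    qed
    have inc: "incseq (\<lambda>N v. w v * indicator (T N) v)"
      by (intro monoI le_funI mult_left_mono) (auto simp: indicator_def T_def)
    have "D = (SUP N. \<integral>\<^sup>+ v. w v * indicator (T N) v \<partial>count_space UNIV)"
      unfolding D_wi sup by (rule nn_integral_monotone_convergence_SUP[OF inc]) simp
    also have "\<dots> \<le> ennreal (1/p)"
    proof (rule SUP_least)
      fix N
      have "(\<integral>\<^sup>+ v. w v * indicator (T N) v \<partial>count_space UNIV) = (\<integral>\<^sup>+ v. w v \<partial>count_space (T N))"
        by (rule nn_integral_count_space_indicator[symmetric]) simp
      also have "\<dots> = (\<Sum>v\<in>T N. w v)" by (rule nn_integral_count_space_finite[OF finite_T])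
      also have "\<dots> = ennreal (\<Sum>v\<in>T N. x^(length v div 2))"
        unfolding w_def by (rule sum_ennreal) (use x0 in simp)
      also have "\<dots> \<le> ennreal (1/p)"
        using trunc_bound[OF p q pq, of N] by (simp add: x_def ennreal_leI)
      finally show "(\<integral>\<^sup>+ v. w v * indicator (T N) v \<partial>count_space UNIV) \<le> ennreal (1/p)" .
    qed
    finally show ?thesis .
  qed
  define Dy where "Dy = {v. dyck v}"
  define G where "G = g ` (Dy \<times> Dy)"
  have Dy_eq: "Dy = insert [] G"
  proof
    show "Dy \<subseteq> insert [] G"
    proof
      fix v assume "v \<in> Dy"
      then show "v \<in> insert [] G"
        using dyck_decomp[of v] by (cases "v = []") (auto simp: Dy_def G_def g_def image_iff)
    qed
    show "insert [] G \<subseteq> Dy" by (auto simp: Dy_def G_def g_def intro: dyck_compose)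
  qed
  have nilG: "[] \<notin> G" by (auto simp: G_def g_def)
  have "D = (\<integral>\<^sup>+ v. w v * indicator {[]} v + w v * indicator G v \<partial>count_space UNIV)"
    unfolding D_wi wi_def
    by (rule nn_integral_cong) (auto simp: indicator_def Dy_eq[unfolded Dy_def] nilG)
  also have "\<dots> = (\<integral>\<^sup>+ v. w v * indicator {[]} v \<partial>count_space UNIV) + (\<integral>\<^sup>+ v. w v * indicator G v \<partial>count_space UNIV)"
    by (rule nn_integral_add) simp_all
  also have "(\<integral>\<^sup>+ v. w v * indicator {[]} v \<partial>count_space UNIV) = 1"
    by (simp add: w_def)
  also have "(\<integral>\<^sup>+ v. w v * indicator G v \<partial>count_space UNIV) = (\<integral>\<^sup>+ v. w v \<partial>count_space G)"
    by (rule nn_integral_count_space_indicator[symmetric]) simp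
  also have "\<dots> = (\<integral>\<^sup>+ uv. w (g uv) \<partial>count_space (Dy \<times> Dy))"
    unfolding G_def
    by (rule nn_integral_bij_count_space[symmetric], rule inj_on_imp_bij_betw,
        rule inj_on_subset[OF inj_g]) (auto simp: Dy_def)
  also have "\<dots> = (\<integral>\<^sup>+ uv. ennreal x * (wi (fst uv) * wi (snd uv)) \<partial>count_space (Dy \<times> Dy))"
    by (rule nn_integral_cong)
      (auto simp: Dy_def g_def w_def wi_def len_add_div power_add ennreal_mult x0 less_imp_le)
  also have "\<dots> = (\<integral>\<^sup>+ uv. ennreal x * (wi (fst uv) * wi (snd uv)) \<partial>count_space UNIV)"
    by (subst nn_integral_count_space_indicator) (auto intro!: nn_integral_cong simp: wi_def Dy_def indicator_def)
  also have "\<dots> = ennreal x * (\<integral>\<^sup>+ uv. wi (fst uv) * wi (snd uv) \<partial>count_space UNIV)"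
    by (rule nn_integral_cmult) simp
  also have "(\<integral>\<^sup>+ uv. wi (fst uv) * wi (snd uv) \<partial>count_space UNIV) = (\<integral>\<^sup>+ u. \<integral>\<^sup>+ v. wi u * wi v \<partial>count_space UNIV \<partial>count_space UNIV)"
    using nn_integral_fst_count_space[of "\<lambda>uv. wi (fst uv) * wi (snd uv)"] by simp
  also have "\<dots> = (\<integral>\<^sup>+ u. wi u * D \<partial>count_space UNIV)"
    unfolding D_wi by (rule nn_integral_cong) (rule nn_integral_cmult, simp)
  also have "\<dots> = D * D"
    unfolding D_wi[symmetric] by (subst nn_integral_multc) (simp_all add: D_wi)
  finally have eq: "D = 1 + ennreal x * (D * D)" .
  obtain d where d: "D = ennreal d" "0 \<le> d"
    using Dle by (metis ennreal_cases ennreal_less_top neq_top_trans top.not_eq_extremum)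
  have dle: "d \<le> 1/p" using Dle d p by (simp add: ennreal_le_iff)
  have "ennreal d = ennreal (1 + x * (d * d))"
    using eq d x0 by (simp add: ennreal_mult ennreal_plus)
  then have "d = 1 + x * (d * d)" using d x0 by (subst (asm) ennreal_inj) auto
  moreover have "d = d * p + d * q" using pq by (metis distrib_left mult.right_neutral)
  ultimately have "(p * d - 1) * (q * d - 1) = 0" by (simp add: x_def algebra_simps)
  then have "p * d - 1 = 0 \<or> q * d - 1 = 0" by simp
  then have "d = 1/p"
  proof
    assume "q * d - 1 = 0"
    then have "d = 1/q" using q by (simp add: field_simps)
    moreover have "1/p < 1/q" using q qp by (simp add: frac_less2)
    ultimately show ?thesis using dle by simp
  qed (use p in \<open>simp add: field_simps\<close>)
  then show ?thesis using d by (simp add: D_def w_def x_def)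
qed

definition SSc :: "letter list \<Rightarrow> cycle" where "SSc v = ([S,S] @ v @ [H], False)"

lemma inj_SSc: "inj SSc" by (auto simp: inj_def SSc_def)

lemma cycle_prob_SSc: "dyck v \<Longrightarrow> cycle_prob p q \<gamma> (SSc v) = q^2 * p * (p*q)^(length v div 2)"
  by (auto simp: cycle_prob_def SSc_def)

definition F4 :: "cycle set" where "F4 = {([H], False), ([S,H,S], False), ([S,H,H], True), ([S,H,H], False)}"

lemma cycle_prob_other:
  "c \<notin> F4 \<Longrightarrow> c \<notin> SSc ` {v. dyck v} \<Longrightarrow> cycle_prob p q \<gamma> c = 0"
  by (cases c) (auto simp: cycle_prob_def F4_def SSc_def image_iff)

lemma F4_SSc: "F4 \<inter> SSc ` {v. dyck v} = {}"
  by (auto simp: F4_def SSc_def)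

lemma cycle_prob_pts:
  "cycle_prob p q \<gamma> ([H], False) = p"
  "cycle_prob p q \<gamma> ([S,H,S], False) = p * q^2"
  "cycle_prob p q \<gamma> ([S,H,H], True) = p^2 * q * \<gamma>"
  "cycle_prob p q \<gamma> ([S,H,H], False) = p^2 * q * (1 - \<gamma>)"
  by (simp_all add: cycle_prob_def)

lemma cycle_prob_nonneg:
  fixes p q \<gamma> :: real
  assumes "0 < q" "q < p" "0 \<le> \<gamma>" "\<gamma> \<le> 1"
  shows "0 \<le> cycle_prob p q \<gamma> c"
  using assms by (auto simp: cycle_prob_def)

lemma ennreal_comb: "0 \<le> a \<Longrightarrow> 0 \<le> b \<Longrightarrow> 0 \<le> c \<Longrightarrow> ennreal a + ennreal b * ennreal c = ennreal (a + b * c)"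
  by (simp add: ennreal_mult ennreal_plus)

lemma cycle_prob_sum:
  fixes p q \<gamma> :: real
  assumes q: "0 < q" and qp: "q < p" and pq: "p + q = 1" and g0: "0 \<le> \<gamma>" and g1: "\<gamma> \<le> 1"
  shows "(\<integral>\<^sup>+ c. ennreal (cycle_prob p q \<gamma> c) \<partial>count_space UNIV) = 1"
proof -
  have p: "0 < p" using q qp by simp
  let ?f = "\<lambda>c. ennreal (cycle_prob p q \<gamma> c)"
  let ?SS = "SSc ` {v. dyck v}"
  have "(\<integral>\<^sup>+ c. ?f c \<partial>count_space UNIV) = (\<integral>\<^sup>+ c. ?f c * indicator F4 c + ?f c * indicator ?SS c \<partial>count_space UNIV)"
  proof (rule nn_integral_cong)
    fix c
    show "?f c = ?f c * indicator F4 c + ?f c * indicator ?SS c"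
    proof (cases "c \<in> F4")
      case True
      then have "c \<notin> ?SS" using F4_SSc by blast
      then show ?thesis using True by simp
    next
      case False
      show ?thesis
      proof (cases "c \<in> ?SS")
        case True then show ?thesis using False by simp
      next
        case F2: False
        then show ?thesis using False cycle_prob_other[OF False F2] by simp
      qed
    qed
  qed
  also have "\<dots> = (\<integral>\<^sup>+ c. ?f c * indicator F4 c \<partial>count_space UNIV) + (\<integral>\<^sup>+ c. ?f c * indicator ?SS c \<partial>count_space UNIV)"
    by (rule nn_integral_add) simp_all
  also have "(\<integral>\<^sup>+ c. ?f c * indicator F4 c \<partial>count_space UNIV) = (\<Sum>c\<in>F4. ?f c)"
    by (simp add: nn_integral_count_space_indicator[symmetric] nn_integral_count_space_finite F4_def)
  also have "(\<Sum>c\<in>F4. ?f c) = ennreal (\<Sum>c\<in>F4. cycle_prob p q \<gamma> c)"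
    by (rule sum_ennreal) (rule cycle_prob_nonneg[OF q qp g0 g1])
  also have "(\<Sum>c\<in>F4. cycle_prob p q \<gamma> c) = p + p * q^2 + p^2 * q * \<gamma> + p^2 * q * (1 - \<gamma>)"
    by (simp add: F4_def cycle_prob_pts)
  also have "(\<integral>\<^sup>+ c. ?f c * indicator ?SS c \<partial>count_space UNIV) = (\<integral>\<^sup>+ c. ?f c \<partial>count_space ?SS)"
    by (rule nn_integral_count_space_indicator[symmetric]) simp
  also have "\<dots> = (\<integral>\<^sup>+ v. ?f (SSc v) \<partial>count_space {v. dyck v})"
    by (rule nn_integral_bij_count_space[symmetric]) (rule inj_on_imp_bij_betw, rule inj_on_subset[OF inj_SSc], simp)
  also have "\<dots> = (\<integral>\<^sup>+ v. ennreal (q^2 * p) * ennreal ((p*q)^(length v div 2)) \<partial>count_space {v. dyck v})"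
    by (rule nn_integral_cong) (use p q in \<open>simp add: cycle_prob_SSc ennreal_mult[symmetric]\<close>)
  also have "\<dots> = ennreal (q^2 * p) * ennreal (1/p)"
    by (subst nn_integral_cmult) (simp, simp only: dyck_sum[OF q qp pq])
  also have "ennreal (p + p * q^2 + p^2 * q * \<gamma> + p^2 * q * (1 - \<gamma>)) + ennreal (q^2 * p) * ennreal (1/p)
      = ennreal ((p + p * q^2 + p^2 * q * \<gamma> + p^2 * q * (1 - \<gamma>)) + (q^2 * p) * (1/p))"
    by (rule ennreal_comb) (use p q g0 g1 in simp_all)
  also have "(p + p * q^2 + p^2 * q * \<gamma> + p^2 * q * (1 - \<gamma>)) + (q^2 * p) * (1/p) = 1"
  proof -
    have "p = 1 - q" using pq by simp
    have e: "q^2 * p * (1/p) = q^2" using p by simp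
    have "p + p * q^2 + p^2 * q * \<gamma> + p^2 * q * (1 - \<gamma>) = p + p * q^2 + p^2 * q"
      by (simp add: algebra_simps)
    moreover have "p + p * q^2 + p^2 * q + q^2 = 1"
      unfolding \<open>p = 1 - q\<close> by (simp add: power2_eq_square algebra_simps)
    ultimately show ?thesis using e by simp
  qed
  finally show ?thesis by (simp only: ennreal_1)
qed

lemma pmf_cycle:
  fixes p q \<gamma> :: real
  assumes "0 < q" "q < p" "p + q = 1" "0 \<le> \<gamma>" "\<gamma> \<le> 1"
  shows "pmf (cycle_pmf p q \<gamma>) c = cycle_prob p q \<gamma> c"
  unfolding cycle_pmf_def
  by (rule pmf_embed_pmf) (use cycle_prob_nonneg[OF assms(1,2,4,5)] cycle_prob_sum[OF assms] in auto)

lemma rel_height_pos: "j < length (fst c) \<Longrightarrow> 1 \<le> rel_height c j"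
  by (simp add: rel_height_def take_Suc_conv_app_nth)

lemma height0: "height s (0, j) = rel_height (s !! 0) j"
  by (simp add: height_def)

lemma height1: "height s (Suc 0, j) = advance (s !! 0) + rel_height (s !! 1) j"
  by (simp add: height_def)

lemma height_ge1:
  assumes "is_block s (k, j)" "1 \<le> k"
  shows "advance (s !! 0) + 1 \<le> height s (k, j)"
proof -
  have "advance (s !! 0) = (\<Sum>k'\<in>{0}. advance (s !! k'))" by simp
  also have "\<dots> \<le> (\<Sum>k'<k. advance (s !! k'))"
    by (rule sum_mono2) (use assms in auto)
  finally have "advance (s !! 0) \<le> (\<Sum>k'<k. advance (s !! k'))" .
  moreover have "1 \<le> rel_height (s !! k) j" using rel_height_pos[of j "s !! k"] assms by (simp add: is_block_def)
  ultimately show ?thesis unfolding height_def by simp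
qed

lemma height_ge2:
  assumes "is_block s (k, j)" "2 \<le> k"
  shows "advance (s !! 0) + advance (s !! 1) + 1 \<le> height s (k, j)"
proof -
  have "advance (s !! 0) + advance (s !! 1) = (\<Sum>k'\<in>{0,1}. advance (s !! k'))" by simp
  also have "\<dots> \<le> (\<Sum>k'<k. advance (s !! k'))"
    by (rule sum_mono2) (use assms in auto)
  finally have "advance (s !! 0) + advance (s !! 1) \<le> (\<Sum>k'<k. advance (s !! k'))" .
  moreover have "1 \<le> rel_height (s !! k) j" using rel_height_pos[of j "s !! k"] assms by (simp add: is_block_def)
  ultimately show ?thesis unfolding height_def by simp
qed

lemma advance_pos:
  assumes "official_in c j" "j < length (fst c)"
  shows "1 \<le> advance c"
proof -
  have "finite {j. j < length (fst c) \<and> official_in c j}" by simp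
  moreover have "j \<in> {j. j < length (fst c) \<and> official_in c j}" using assms by simp
  ultimately have "card {j. j < length (fst c) \<and> official_in c j} \<noteq> 0"
    by (metis card_0_eq empty_iff)
  then show ?thesis unfolding advance_def by linarith
qed

lemma not_referred_att:
  assumes "can_refer n1 s n0 u"
    and "\<And>n. can_refer n1 s n u \<Longrightarrow> miner s n = H \<Longrightarrow> height s n0 < height s n"
  shows "\<not> referred_by_honest n1 s u"
proof
  assume "referred_by_honest n1 s u"
  then obtain n where n: "can_refer n1 s n u" "miner s n = H" "\<And>n'. can_refer n1 s n' u \<Longrightarrow> height s n \<le> height s n'"
    unfolding referred_by_honest_def by blast
  have "height s n \<le> height s n0" using n(3) assms(1) by blast
  moreover have "height s n0 < height s n" using assms(2) n(1,2) by blast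
  ultimately show False by simp
qed

lemma referred_hon:
  assumes "can_refer n1 s n0 u" "miner s n0 = H"
    and "\<And>n. can_refer n1 s n u \<Longrightarrow> height s n0 \<le> height s n"
  shows "referred_by_honest n1 s u"
  using assms unfolding referred_by_honest_def by blast

lemma Uh_empty: "(\<And>j. is_uncle s (0, j) \<Longrightarrow> \<not> referred_by_honest n1 s (0, j)) \<Longrightarrow> Uh n1 s = 0"
proof -
  assume "\<And>j. is_uncle s (0, j) \<Longrightarrow> \<not> referred_by_honest n1 s (0, j)"
  then have "{j. is_uncle s (0, j) \<and> referred_by_honest n1 s (0, j)} = {}" by auto
  then show ?thesis unfolding Uh_def by (simp only: card.empty)
qed

lemma Uh_single: "(\<And>j. is_uncle s (0, j) \<Longrightarrow> j = a) \<Longrightarrow> is_uncle s (0, a) \<Longrightarrow>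
   Uh n1 s = (if referred_by_honest n1 s (0, a) then 1 else 0)"
proof -
  assume a: "\<And>j. is_uncle s (0, j) \<Longrightarrow> j = a" "is_uncle s (0, a)"
  show ?thesis
  proof (cases "referred_by_honest n1 s (0, a)")
    case True
    then have "{j. is_uncle s (0, j) \<and> referred_by_honest n1 s (0, j)} = {a}" using a by blast
    then have "Uh n1 s = 1" unfolding Uh_def by (simp only: card.empty card_insert_disjoint finite.emptyI empty_iff not_False_eq_True)
    with True show ?thesis by simp
  next
    case False
    then have "{j. is_uncle s (0, j) \<and> referred_by_honest n1 s (0, j)} = {}" using a by blast
    then have "Uh n1 s = 0" unfolding Uh_def by (simp only: card.empty)
    with False show ?thesis by simp
  qed
qed

definition As :: "cycle set" where "As = {([S,H,H], True), ([S,H,H], False)}"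
definition Cs :: "cycle set" where "Cs = {([H], False), ([S,H,H], False)}"
definition Bk :: "nat \<Rightarrow> cycle" where "Bk k = (replicate (k+2) S @ replicate (k+1) H, False)"
definition Supp :: "cycle set" where "Supp = F4 \<union> SSc ` {v. dyck v}"

lemma is_uncle0: "is_uncle s (0, j) \<longleftrightarrow> j < length (fst (s !! 0)) \<and> \<not> official_in (s !! 0) j \<and>
   (case parent_in (s !! 0) j of None \<Rightarrow> True | Some j' \<Rightarrow> j' < length (fst (s !! 0)) \<and> official_in (s !! 0) j')"
  by (auto simp: is_uncle_def official_def is_block_def split: option.splits)

lemma less3: "(j::nat) < 3 \<longleftrightarrow> j = 0 \<or> j = 1 \<or> j = 2" by auto

lemma lt3D: "j < Suc (Suc (Suc 0)) \<Longrightarrow> j = 0 \<or> j = Suc 0 \<or> j = Suc (Suc 0)" by auto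

lemma official_SS: "official_in (SSc v) j \<longleftrightarrow> fst (SSc v) ! j = S"
  by (simp add: official_in_def SSc_def)

lemma c1_facts:
  assumes "c \<in> Supp"
  shows "\<exists>j1. j1 < length (fst c) \<and> official_in c j1 \<and> rel_height c j1 = 1 \<and> (fst c ! j1 = H \<longleftrightarrow> c \<in> Cs) \<and>
     (\<forall>j. j < length (fst c) \<and> official_in c j \<and> rel_height c j = 1 \<and> fst c ! j = H \<longrightarrow> c \<in> Cs)"
proof -
  consider "c = ([H], False)" | "c = ([S,H,S], False)" | "c = ([S,H,H], True)" | "c = ([S,H,H], False)"
    | v where "dyck v" "c = SSc v"
    using assms by (auto simp: Supp_def F4_def)
  then show ?thesis
  proof cases
    case 1 then show ?thesis by (intro exI[of _ 0]) (auto simp: official_in_def rel_height_def Cs_def)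
  next
    case 2 then show ?thesis
      by (intro exI[of _ 0]) (auto simp: official_in_def rel_height_def Cs_def less3 dest!: lt3D)
  next
    case 3 then show ?thesis
      by (intro exI[of _ 0]) (auto simp: official_in_def rel_height_def Cs_def less3 dest!: lt3D)
  next
    case 4 then show ?thesis
      by (intro exI[of _ 1]) (auto simp: official_in_def rel_height_def Cs_def less3 dest!: lt3D)
  next
    case 5 then show ?thesis using official_SS[of v, unfolded SSc_def]
      by (intro exI[of _ 0]) (auto simp: rel_height_def Cs_def SSc_def)
  qed
qed

lemma advance_SHS: "advance ([S,H,S], b) = 2"
proof -
  have "{j. j < length (fst ([S,H,S], b)) \<and> official_in ([S,H,S], b) j} = {0, 2}"
    by (auto simp: official_in_def less3 dest!: lt3D)
  then show ?thesis by (simp add: advance_def)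
qed

lemma advance_SHH: "advance ([S,H,H], b) = 2"
proof -
  have "{j. j < length (fst ([S,H,H], b)) \<and> official_in ([S,H,H], b) j} = (if b then {0, 2} else {1, 2})"
    by (auto simp: official_in_def less3 dest!: lt3D)
  then show ?thesis by (simp add: advance_def)
qed

lemma Uh_H: "s !! 0 = ([H], False) \<Longrightarrow> Uh n1 s = 0"
  by (rule Uh_empty) (simp add: is_uncle0 official_in_def)

lemma Uh_SHS:
  assumes c: "s !! 0 = ([S,H,S], False)" and n1: "1 \<le> n1"
  shows "Uh n1 s = 0"
proof (rule Uh_empty)
  fix j assume u: "is_uncle s (0, j)"
  then have j: "j = 1" using c by (auto simp: is_uncle0 official_in_def less3 dest!: lt3D)
  have cr: "can_refer n1 s (0, 2) (0, 1)"
    using u j c n1 by (simp add: can_refer_def official_def is_block_def official_in_def mined_before_def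
        height0 rel_height_def)
  show "\<not> referred_by_honest n1 s (0, j)"
    unfolding j
  proof (rule not_referred_att[OF cr])
    fix n assume n: "can_refer n1 s n (0, 1)" "miner s n = H"
    obtain k i where ki: "n = (k, i)" by (cases n)
    show "height s (0, 2) < height s n"
    proof (cases "k = 0")
      case True
      then have "i < 3" "i \<noteq> 1" using n c ki by (auto simp: can_refer_def official_def is_block_def official_in_def)
      then have "i = 0 \<or> i = 2" by auto
      then have "miner s n = S" using c ki True by (auto simp: miner_def)
      then show ?thesis using n by simp
    next
      case False
      then have "advance (s !! 0) + 1 \<le> height s n"
        using n ki height_ge1[of s k i] by (simp add: can_refer_def official_def)
      then show ?thesis using c by (simp add: advance_SHS height0 rel_height_def)
    qed
  qed
qed

lemma Uh_SHH:
  assumes c: "s !! 0 = ([S,H,H], b)" and n1: "1 \<le> n1"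
  shows "Uh n1 s = 1"
proof -
  define a where "a = (if b then 1 else (0::nat))"
  have unc: "is_uncle s (0, a)"
    using c by (simp add: is_uncle0 official_in_def parent_in_def rel_height_def a_def)
  have only: "j = a" if "is_uncle s (0, j)" for j
    using that c by (auto simp: is_uncle0 official_in_def less3 a_def)
  have cr: "can_refer n1 s (0, 2) (0, a)"
    using unc c n1 by (simp add: can_refer_def official_def is_block_def official_in_def mined_before_def
        height0 rel_height_def a_def)
  have "referred_by_honest n1 s (0, a)"
  proof (rule referred_hon[OF cr])
    show "miner s (0, 2) = H" using c by (simp add: miner_def)
  next
    fix n assume "can_refer n1 s n (0, a)"
    then have "height s (0, a) < height s n" by (simp add: can_refer_def)
    moreover have "height s (0, a) = 1" using c by (simp add: height0 rel_height_def a_def)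
    moreover have "height s (0, 2) = 2" using c by (simp add: height0 rel_height_def)
    ultimately show "height s (0, 2) \<le> height s n" by simp
  qed
  then show ?thesis using Uh_single[of s a, OF only unc] by simp
qed

lemma rel_height_card:
  assumes "j < length (fst c)"
  shows "rel_height c j = card {i. i < Suc j \<and> fst c ! i = fst c ! j}"
proof -
  have "rel_height c j = card {i. i < length (take (Suc j) (fst c)) \<and> take (Suc j) (fst c) ! i = fst c ! j}"
    unfolding rel_height_def by (rule length_filter_conv_card)
  also have "{i. i < length (take (Suc j) (fst c)) \<and> take (Suc j) (fst c) ! i = fst c ! j} = {i. i < Suc j \<and> fst c ! i = fst c ! j}"
    using assms by auto
  finally show ?thesis .
qed

lemma nS_rep[simp]: "nS (replicate n S) = n" "nS (replicate n H) = 0"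
  by (induction n) auto
lemma nH_rep[simp]: "nH (replicate n H) = n" "nH (replicate n S) = 0"
  by (induction n) auto

lemma SS_shape:
  assumes "l = S # S # v @ [H]"
  obtains a r where "l = replicate a S @ H # r" "2 \<le> a"
proof -
  define a where "a = length (takeWhile (\<lambda>x. x = S) l)"
  have tw: "takeWhile (\<lambda>x. x = S) l = replicate a S"
    unfolding a_def by (metis (mono_tags) replicate_length_same set_takeWhileD)
  have "dropWhile (\<lambda>x. x = S) l \<noteq> []" using assms by (auto simp: dropWhile_eq_Nil_conv)
  moreover have "hd (dropWhile (\<lambda>x. x = S) l) \<noteq> S" if "dropWhile (\<lambda>x. x = S) l \<noteq> []"
    using hd_dropWhile[OF that] .
  ultimately obtain r where dw: "dropWhile (\<lambda>x. x = S) l = H # r"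
    by (metis letter_cases list.collapse)
  have "l = replicate a S @ H # r" using takeWhile_dropWhile_id[of "\<lambda>x. x = S" l] tw dw by simp
  moreover have "2 \<le> a" using assms unfolding a_def by simp
  ultimately show ?thesis using that by blast
qed

lemma Uh_SS:
  assumes c0: "s !! 0 = SSc v" and dv: "dyck v" and c1: "s !! 1 \<in> Supp" and n1: "2 \<le> n1"
  shows "Uh n1 s = (if s !! 0 \<in> Bk ` {..<n1 - 1} \<and> s !! 1 \<in> Cs then 1 else 0)"
proof -
  define l where "l = fst (s !! 0)"
  have l_def': "l = S # S # v @ [H]" using c0 by (simp add: l_def SSc_def)
  have s0: "s !! 0 = (l, False)" using c0 by (simp add: l_def SSc_def)
  obtain a r where lar: "l = replicate a S @ H # r" and a2: "2 \<le> a" using SS_shape[OF l_def'] by blast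
  have lenl: "a < length l" using lar by simp
  have lS: "l ! j = S" if "j < a" for j using that lar by (simp add: nth_append)
  have la: "l ! a = H" using lar by (simp add: nth_append)
  have off: "official_in (s !! 0) j \<longleftrightarrow> l ! j = S" for j
    using official_SS[of v j] c0 by (simp add: l_def)
  have relc: "rel_height (s !! 0) j = card {i. i < Suc j \<and> l ! i = l ! j}" if "j < length l" for j
    using rel_height_card[of j "s !! 0"] that by (simp add: l_def)
  have rel_a: "rel_height (s !! 0) a = 1"
  proof -
    have "{i. i < Suc a \<and> l ! i = l ! a} = {a}" using lS la by (auto simp: less_Suc_eq)
    then show ?thesis using relc[OF lenl] by simp
  qed
  have adv0: "advance (s !! 0) = card {j. j < length l \<and> l ! j = S}"
    unfolding advance_def using off by (simp add: l_def)
  have adv_ge: "a \<le> advance (s !! 0)"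
  proof -
    have "{..<a} \<subseteq> {j. j < length l \<and> l ! j = S}" using lS lenl by auto
    then have "card {..<a} \<le> card {j. j < length l \<and> l ! j = S}" by (intro card_mono) auto
    then show ?thesis using adv0 by simp
  qed
  have unc: "is_uncle s (0, a)"
    using lenl la off rel_a by (simp add: is_uncle0 parent_in_def l_def)
  have only: "j = a" if "is_uncle s (0, j)" for j
  proof (rule ccontr)
    assume ja: "j \<noteq> a"
    have jl: "j < length l" and ljH: "l ! j = H"
      using that off by (auto simp: is_uncle0 l_def letter_cases)
    have "a < j" using ja ljH lS[of j] by (cases "j < a") auto
    have rel2: "rel_height (s !! 0) j \<noteq> 1"
    proof -
      have "{a, j} \<subseteq> {i. i < Suc j \<and> l ! i = l ! j}" using \<open>a < j\<close> la ljH by auto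
      then have "card {a, j} \<le> card {i. i < Suc j \<and> l ! i = l ! j}" by (intro card_mono) auto
      then show ?thesis using relc[OF jl] ja by simp
    qed
    have notSHH: "fst (s !! 0) \<noteq> [S,H,H]" using s0 l_def' by simp
    define G where "G = (GREATEST j'. j' < j \<and> fst (s !! 0) ! j' = fst (s !! 0) ! j)"
    have "G < j \<and> fst (s !! 0) ! G = fst (s !! 0) ! j"
      unfolding G_def
      by (rule GreatestI_ex_nat[where b = j]) (use \<open>a < j\<close> la ljH in \<open>auto simp: l_def\<close>)
    then have "l ! G = H" "G < length l" using ljH jl by (auto simp: l_def)
    moreover have "parent_in (s !! 0) j = Some G"
      using rel2 notSHH by (simp add: parent_in_def G_def)
    ultimately have "\<not> is_uncle s (0, j)" using off by (simp add: is_uncle0 l_def)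
    then show False using that by simp
  qed
  have Uh_eq: "Uh n1 s = (if referred_by_honest n1 s (0, a) then 1 else 0)"
    by (rule Uh_single[OF only unc])
  have hu: "height s (0, a) = 1" using rel_a by (simp add: height0)
  have R0: "l ! i = S \<and> a < i \<and> i < length l" if "can_refer n1 s (0, i) (0, a)" for i
    using that off by (auto simp: can_refer_def official_def is_block_def mined_before_def l_def)
  have R1: "advance (s !! 0) + 1 \<le> height s (k, i)" if "can_refer n1 s (k, i) u" "1 \<le> k" for k i u
    using that height_ge1[of s k i] by (simp add: can_refer_def official_def)
  show ?thesis
  proof (cases "\<exists>j. a < j \<and> j < length l \<and> l ! j = S")
    case True
    define j0 where "j0 = (LEAST j. a < j \<and> j < length l \<and> l ! j = S)"
    have j0: "a < j0 \<and> j0 < length l \<and> l ! j0 = S"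
      unfolding j0_def using True by (metis (mono_tags, lifting) LeastI)
    have notB: "s !! 0 \<notin> Bk ` {..<n1 - 1}"
    proof
      assume "s !! 0 \<in> Bk ` {..<n1 - 1}"
      then obtain k where lk: "l = replicate (k+2) S @ replicate (k+1) H" using s0 by (auto simp: Bk_def)
      then have "\<forall>i. k + 2 \<le> i \<and> i < length l \<longrightarrow> l ! i = H" by (auto simp: nth_append simp del: replicate_Suc)
      moreover have "k + 2 \<le> a"
      proof (rule ccontr)
        assume "\<not> k + 2 \<le> a"
        then have "l ! a = S" using lk by (simp add: nth_append del: replicate_Suc)
        then show False using la by simp
      qed
      ultimately show False using j0 by auto
    qed
    have "\<not> referred_by_honest n1 s (0, a)"
    proof (cases "a \<le> n1")
      case True
      have rel_j0: "rel_height (s !! 0) j0 = a + 1"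
      proof -
        have "{i. i < Suc j0 \<and> l ! i = l ! j0} = insert j0 {..<a}"
        proof
          show "{i. i < Suc j0 \<and> l ! i = l ! j0} \<subseteq> insert j0 {..<a}"
          proof
            fix i assume i: "i \<in> {i. i < Suc j0 \<and> l ! i = l ! j0}"
            show "i \<in> insert j0 {..<a}"
            proof (rule ccontr)
              assume "i \<notin> insert j0 {..<a}"
              then have "a \<le> i" "i < j0" using i by auto
              moreover have "i \<noteq> a" using i la j0 by auto
              moreover have "i < length l" using \<open>i < j0\<close> j0 by simp
              ultimately have "a < i \<and> i < length l \<and> l ! i = S" using i j0 by auto
              then have "j0 \<le> i" unfolding j0_def by (rule Least_le)
              then show False using \<open>i < j0\<close> by simp
            qed
          qed
          show "insert j0 {..<a} \<subseteq> {i. i < Suc j0 \<and> l ! i = l ! j0}" using j0 lS by auto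
        qed
        then show ?thesis using relc[of j0] j0 by simp
      qed
      have cr: "can_refer n1 s (0, j0) (0, a)"
        using j0 unc True off rel_j0 hu a2
        by (simp add: can_refer_def official_def is_block_def mined_before_def height0 l_def)
      show ?thesis
      proof (rule not_referred_att[OF cr])
        fix n assume n: "can_refer n1 s n (0, a)" "miner s n = H"
        obtain k i where ki: "n = (k, i)" by (cases n)
        show "height s (0, j0) < height s n"
        proof (cases "k = 0")
          case True
          then have "l ! i = S" using R0 n ki by blast
          then show ?thesis using n ki True by (simp add: miner_def l_def)
        next
          case False
          have "advance (s !! 0) + 1 \<le> height s n" using R1[of k i] n ki False by simp
          moreover have "a + 1 \<le> advance (s !! 0)"
          proof -
            have "insert j0 {..<a} \<subseteq> {j. j < length l \<and> l ! j = S}" using lS lenl j0 by auto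
            then have "card (insert j0 {..<a}) \<le> card {j. j < length l \<and> l ! j = S}" by (intro card_mono) auto
            then show ?thesis using adv0 j0 by simp
          qed
          ultimately show ?thesis using rel_j0 by (simp add: height0)
        qed
      qed
    next
      case False
      have "\<not> can_refer n1 s n (0, a)" for n
      proof
        assume n: "can_refer n1 s n (0, a)"
        obtain k i where ki: "n = (k, i)" by (cases n)
        show False
        proof (cases "k = 0")
          case True
          then have i: "l ! i = S" "a < i" "i < length l" using R0 n ki by blast+
          have "insert i {..<a} \<subseteq> {i'. i' < Suc i \<and> l ! i' = l ! i}" using i lS by auto
          then have "card (insert i {..<a}) \<le> rel_height (s !! 0) i"
            using relc[OF i(3)] by (simp add: card_mono)
          then have "a + 1 \<le> height s n" using i ki True by (simp add: height0)
          then show False using n False hu by (simp add: can_refer_def)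
        next
          case kF: False
          have "advance (s !! 0) + 1 \<le> height s n" using R1[of k i] n ki kF by simp
          then show False using n False hu adv_ge by (simp add: can_refer_def)
        qed
      qed
      then show ?thesis unfolding referred_by_honest_def by blast
    qed
    then show ?thesis using Uh_eq notB by simp
  next
    case False
    then have lH: "l ! j = H" if "a < j" "j < length l" for j using that by (simp add: letter_cases)
    have adv_eq: "advance (s !! 0) = a"
    proof -
      have "{j. j < length l \<and> l ! j = S} = {..<a}"
        using lS lH la lenl by (auto simp: not_less_iff_gr_or_eq) (metis linorder_neqE_nat letter.distinct(2) la)
      then show ?thesis using adv0 by simp
    qed
    have lH': "l ! j = H" if "a \<le> j" "j < length l" for j using lH la that by (cases "j = a") auto
    have lrep: "l = replicate a S @ replicate (length l - a) H"
      by (rule nth_equalityI) (use lenl lS lH' in \<open>auto simp: nth_append\<close>)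
    have cnt: "length l - a = a - 1"
    proof -
      have c1': "nS l = a" using arg_cong[OF lrep, of nS] by (simp add: nS_rep)
      have "nH l = length l - a" using arg_cong[OF lrep, of nH] by (simp add: nH_rep)
      moreover have "nS l = Suc (Suc (nS v))" "nH l = Suc (nH v)" using l_def' by simp_all
      moreover have "nS v = nH v" using dv by (simp add: dyck_alt)
      ultimately show ?thesis using c1' by simp
    qed
    define m where "m = a - 2"
    have m: "a = m + 2" using a2 by (simp add: m_def)
    have e1: "length l - a = m + 1" using cnt m by simp
    have lm: "l = replicate (m+2) S @ replicate (m+1) H"
    proof -
      have "l = replicate a S @ replicate (m+1) H" using lrep unfolding e1 .
      then show ?thesis unfolding m .
    qed
    have s0B: "s !! 0 = Bk (a - 2)"
      unfolding m_def[symmetric] Bk_def using s0 lm by simp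
    have Bmem: "s !! 0 \<in> Bk ` {..<n1 - 1} \<longleftrightarrow> a \<le> n1"
    proof
      assume "s !! 0 \<in> Bk ` {..<n1 - 1}"
      then obtain k where k: "k < n1 - 1" "Bk k = Bk (a - 2)" using s0B by auto
      have "length (fst (Bk k)) = length (fst (Bk (a - 2)))" using k(2) by (simp only:)
      then have "k = a - 2" unfolding Bk_def by simp
      then show "a \<le> n1" using k a2 by simp
    next
      assume "a \<le> n1"
      then show "s !! 0 \<in> Bk ` {..<n1 - 1}" using s0B a2 by auto
    qed
    have R0': "\<not> can_refer n1 s (0, i) (0, a)" for i
      using R0[of i] lH by auto
    have Rk: "a + 1 \<le> height s n" if "can_refer n1 s n (0, a)" for n
    proof -
      obtain k i where ki: "n = (k, i)" by (cases n)
      have "k \<noteq> 0"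
      proof
        assume "k = 0"
        then have "can_refer n1 s (0, i) (0, a)" using that ki by simp
        then show False using R0' by blast
      qed
      then show ?thesis using R1[of k i] that ki adv_eq by simp
    qed
    show ?thesis
    proof (cases "a \<le> n1")
      case False
      have "\<not> can_refer n1 s n (0, a)" for n
        using Rk[of n] False hu by (auto simp: can_refer_def)
      then have "\<not> referred_by_honest n1 s (0, a)" unfolding referred_by_honest_def by blast
      then show ?thesis using Uh_eq Bmem False by simp
    next
      case True
      obtain j1 where j1: "j1 < length (fst (s !! 1))" "official_in (s !! 1) j1" "rel_height (s !! 1) j1 = 1"
        "fst (s !! 1) ! j1 = H \<longleftrightarrow> s !! 1 \<in> Cs"
        "\<forall>j. j < length (fst (s !! 1)) \<and> official_in (s !! 1) j \<and> rel_height (s !! 1) j = 1 \<and> fst (s !! 1) ! j = H \<longrightarrow> s !! 1 \<in> Cs"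
        using c1_facts[OF c1] by blast
      have h1: "height s (1, j1) = a + 1" using j1 adv_eq height1[of s j1] by simp
      have cr: "can_refer n1 s (1, j1) (0, a)"
        using j1 unc True h1 hu a2 by (simp add: can_refer_def official_def is_block_def mined_before_def)
      show ?thesis
      proof (cases "s !! 1 \<in> Cs")
        case True
        have "referred_by_honest n1 s (0, a)"
        proof (rule referred_hon[OF cr])
          show "miner s (1, j1) = H" using j1 True by (simp add: miner_def)
        next
          fix n assume "can_refer n1 s n (0, a)"
          then show "height s (1, j1) \<le> height s n" using Rk h1 by simp
        qed
        then show ?thesis using Uh_eq Bmem \<open>a \<le> n1\<close> True by simp
      next
        case False
        have adv1: "1 \<le> advance (s !! 1)" using advance_pos j1 by blast
        have "\<not> referred_by_honest n1 s (0, a)"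
        proof (rule not_referred_att[OF cr])
          fix n assume n: "can_refer n1 s n (0, a)" "miner s n = H"
          obtain k i where ki: "n = (k, i)" by (cases n)
          have k0: "k \<noteq> 0"
          proof
            assume "k = 0"
            then have "can_refer n1 s (0, i) (0, a)" using n ki by simp
            then show False using R0' by blast
          qed
          show "height s (1, j1) < height s n"
          proof (cases "k = 1")
            case True
            have i: "i < length (fst (s !! 1))" "official_in (s !! 1) i" "fst (s !! 1) ! i = H"
              using n ki True by (auto simp: can_refer_def official_def is_block_def miner_def)
            then have "rel_height (s !! 1) i \<noteq> 1" using j1(5) False by blast
            moreover have "1 \<le> rel_height (s !! 1) i" using rel_height_pos i by blast
            ultimately show ?thesis using h1 ki True height1[of s i] adv_eq by simp
          next
            case False
            then have "2 \<le> k" using k0 by simp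
            then have "advance (s !! 0) + advance (s !! 1) + 1 \<le> height s n"
              using height_ge2[of s k i] n ki by (simp add: can_refer_def official_def)
            then show ?thesis using h1 adv_eq adv1 by simp
          qed
        qed
        then show ?thesis using Uh_eq False by simp
      qed
    qed
  qed
qed

instance letter :: countable by countable_datatype

lemma stake_meas: "stake K \<in> measurable (stream_space (measure_pmf P)) (count_space (UNIV :: cycle list set))"
proof -
  have "sets (stream_space (measure_pmf P)) = sets (stream_space (count_space (UNIV :: cycle set)))"
    by (rule sets_stream_space_cong) simp
  then show ?thesis using measurable_stake[where 'a = cycle] by (simp add: measurable_cong_sets)
qed

lemma finite_dep_pred:
  fixes Q :: "cycle stream \<Rightarrow> bool"
  assumes "\<And>s t. stake K s = stake K t \<Longrightarrow> Q s = Q t"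
  shows "Measurable.pred (stream_space (measure_pmf P)) Q"
proof -
  define z :: "cycle stream" where "z = sconst undefined"
  have eq: "Q s = (\<lambda>l. Q (l @- z)) (stake K s)" for s
    by (rule assms) (simp add: stake_shift)
  have meas: "(\<lambda>s. (\<lambda>l. Q (l @- z)) (stake K s)) \<in> measurable (stream_space (measure_pmf P)) (count_space UNIV)"
    by (rule measurable_compose[OF stake_meas]) simp
  have EQ: "Q = (\<lambda>s. (\<lambda>l. Q (l @- z)) (stake K s))" by (rule ext) (rule eq)
  show ?thesis by (subst EQ) (rule meas)
qed

lemma stake_eq_nth: "stake K s = stake K t \<Longrightarrow> k < K \<Longrightarrow> s !! k = t !! k"
proof -
  assume a: "stake K s = stake K t" "k < K"
  have "s !! k = stake K s ! k" using a(2) by simp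
  also have "\<dots> = stake K t ! k" using a(1) by simp
  also have "\<dots> = t !! k" using a(2) by simp
  finally show ?thesis .
qed

lemma dep_facts:
  assumes "\<And>k. k < K \<Longrightarrow> s !! k = t !! k" "fst n < K"
  shows "official s n = official t n" "miner s n = miner t n" "height s n = height t n"
    "is_uncle s n = is_uncle t n" "is_block s n = is_block t n"
proof -
  have e: "s !! fst n = t !! fst n" using assms by simp
  show "official s n = official t n" "miner s n = miner t n" "is_block s n = is_block t n"
    using e by (simp_all add: official_def miner_def is_block_def)
  show "is_uncle s n = is_uncle t n"
    using e by (auto simp: is_uncle_def official_def is_block_def split: option.splits)
  have "(\<Sum>k<fst n. advance (s !! k)) = (\<Sum>k<fst n. advance (t !! k))"
    by (rule sum.cong) (use assms in auto)
  then show "height s n = height t n" using e by (simp add: height_def)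
qed

lemma can_refer_dep:
  assumes "stake K s = stake K t" "fst n < K" "fst u < K"
  shows "can_refer n1 s n u = can_refer n1 t n u"
proof -
  have a: "\<And>k. k < K \<Longrightarrow> s !! k = t !! k" using assms(1) stake_eq_nth by blast
  show ?thesis unfolding can_refer_def
    using dep_facts[OF a assms(2)] dep_facts[OF a assms(3)] by simp
qed

lemma pred_can_refer: "Measurable.pred (stream_space (measure_pmf P)) (\<lambda>s. can_refer n1 s n u)"
  by (rule finite_dep_pred[where K = "Suc (fst n + fst u)"]) (erule can_refer_dep, auto)

lemma pred_referred: "Measurable.pred (stream_space (measure_pmf P)) (\<lambda>s. referred_by_honest n1 s u)"
proof -
  let ?M = "stream_space (measure_pmf P)"
  have A: "Measurable.pred ?M (\<lambda>s. can_refer n1 s n u)" for n by (rule pred_can_refer)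
  have B: "Measurable.pred ?M (\<lambda>s. miner s n = H)" for n
  proof (rule finite_dep_pred[where K = "Suc (fst n)"])
    fix s t :: "cycle stream" assume st: "stake (Suc (fst n)) s = stake (Suc (fst n)) t"
    have a: "\<And>k. k < Suc (fst n) \<Longrightarrow> s !! k = t !! k" using st stake_eq_nth by blast
    show "(miner s n = H) = (miner t n = H)" using dep_facts(2)[OF a, where n = n] by simp
  qed
  have C: "Measurable.pred ?M (\<lambda>s. height s n \<le> height s n')" for n n'
  proof (rule finite_dep_pred[where K = "Suc (fst n + fst n')"])
    fix s t :: "cycle stream" assume st: "stake (Suc (fst n + fst n')) s = stake (Suc (fst n + fst n')) t"
    have a: "\<And>k. k < Suc (fst n + fst n') \<Longrightarrow> s !! k = t !! k" using st stake_eq_nth by blast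
    show "(height s n \<le> height s n') = (height t n \<le> height t n')"
      using dep_facts(3)[OF a, where n = n] dep_facts(3)[OF a, where n = n'] by simp
  qed
  have D: "Measurable.pred ?M (\<lambda>s. can_refer n1 s n' u \<longrightarrow> height s n \<le> height s n')" for n n'
    by (rule pred_intros_logic(4)[OF A C])
  have E: "Measurable.pred ?M (\<lambda>s. \<forall>n'. can_refer n1 s n' u \<longrightarrow> height s n \<le> height s n')" for n
    by (rule pred_intros_countable(1)[OF D])
  have F: "Measurable.pred ?M (\<lambda>s. can_refer n1 s n u \<and> miner s n = H \<and> (\<forall>n'. can_refer n1 s n' u \<longrightarrow> height s n \<le> height s n'))" for n
    by (rule pred_intros_logic(3)[OF A pred_intros_logic(3)[OF B E]])
  show ?thesis unfolding referred_by_honest_def by (rule pred_intros_countable(2)[OF F])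
qed

lemma pred_uncle0: "Measurable.pred (stream_space (measure_pmf P)) (\<lambda>s. is_uncle s (0, j))"
proof (rule finite_dep_pred[where K = 1])
  fix s t :: "cycle stream" assume st: "stake 1 s = stake 1 t"
  have a: "\<And>k. k < 1 \<Longrightarrow> s !! k = t !! k" using st stake_eq_nth by blast
  show "is_uncle s (0, j) = is_uncle t (0, j)" using dep_facts(4)[where K=1 and s=s and t=t and n="(0, j)", OF a] by simp
qed

lemma card_less_Suc: "card {j. j < Suc L \<and> Q j} = card {j. j < L \<and> Q j} + (if Q L then 1 else 0)"
proof (cases "Q L")
  case True
  then have "{j. j < Suc L \<and> Q j} = insert L {j. j < L \<and> Q j}" by (auto simp: less_Suc_eq)
  then show ?thesis using True by simp
next
  case False
  then have "{j. j < Suc L \<and> Q j} = {j. j < L \<and> Q j}" by (auto simp: less_Suc_eq)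
  then show ?thesis using False by simp
qed

lemma meas_card:
  fixes L :: nat
  assumes "\<And>j. Measurable.pred M (Q j)"
  shows "(\<lambda>s. real (card {j. j < L \<and> Q j s})) \<in> borel_measurable M"
proof (induction L)
  case 0 then show ?case by simp
next
  case (Suc L)
  have m1: "(\<lambda>s. if Q L s then 1 else 0 :: real) \<in> borel_measurable M"
    by (rule measurable_If[OF measurable_const measurable_const predE[OF assms[of L]]]) auto
  have m2: "(\<lambda>s. real (card {j. j < L \<and> Q j s}) + (if Q L s then 1 else 0)) \<in> borel_measurable M"
    by (rule borel_measurable_add[OF Suc m1])
  have eq: "(\<lambda>s. real (card {j. j < Suc L \<and> Q j s})) = (\<lambda>s. real (card {j. j < L \<and> Q j s}) + (if Q L s then 1 else 0))"
    by (rule ext) (simp only: card_less_Suc of_nat_add, simp)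
  show ?case unfolding eq by (rule m2)
qed

lemma Uh_meas: "(\<lambda>s. real (Uh n1 s)) \<in> borel_measurable (stream_space (measure_pmf P))"
proof -
  let ?Q = "\<lambda>j s. is_uncle s (0, j) \<and> referred_by_honest n1 s (0, j)"
  have eq: "real (Uh n1 s) = (\<lambda>L s. real (card {j. j < L \<and> ?Q j s})) (length (fst (s !! 0))) s" for s
  proof -
    have "{j. ?Q j s} = {j. j < length (fst (s !! 0)) \<and> ?Q j s}"
      by (auto simp: is_uncle_def is_block_def)
    then show ?thesis by (simp add: Uh_def)
  qed
  have "(\<lambda>s. (\<lambda>L s. real (card {j. j < L \<and> ?Q j s})) (length (fst (s !! 0))) s) \<in> borel_measurable (stream_space (measure_pmf P))"
  proof (rule measurable_compose_countable[where g = "\<lambda>s. length (fst (s !! 0))"])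
    fix L :: nat
    show "(\<lambda>s. real (card {j. j < L \<and> ?Q j s})) \<in> borel_measurable (stream_space (measure_pmf P))"
      by (rule meas_card) (rule pred_intros_logic(3)[OF pred_uncle0 pred_referred])
  next
    show "(\<lambda>s. length (fst (s !! 0))) \<in> measurable (stream_space (measure_pmf P)) (count_space UNIV)"
      by (rule measurable_compose[OF measurable_snth]) simp
  qed
  then show ?thesis unfolding eq[symmetric] .
qed

lemma dyck_rep: "dyck (replicate k S @ replicate k H)"
  unfolding dyck_alt
proof (intro conjI allI impI)
  show "nS (replicate k S @ replicate k H) = nH (replicate k S @ replicate k H)" by simp
next
  fix j assume j: "j \<le> length (replicate k S @ replicate k H)"
  show "nH (take j (replicate k S @ replicate k H)) \<le> nS (take j (replicate k S @ replicate k H))"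
  proof (cases "j \<le> k")
    case True then show ?thesis by (simp add: take_append min_def)
  next
    case False then show ?thesis using j by (simp add: take_append min_def)
  qed
qed

lemma Bk_SSc: "Bk k = SSc (replicate k S @ replicate k H)"
  by (simp add: Bk_def SSc_def replicate_append_same[symmetric])

lemma cycle_prob_Bk: "cycle_prob p q \<gamma> (Bk k) = q^2 * p * (p*q)^k"
  unfolding Bk_SSc by (subst cycle_prob_SSc[OF dyck_rep]) simp

lemma inj_Bk: "inj Bk"
proof (rule injI)
  fix k k' assume "Bk k = Bk k'"
  then have "length (fst (Bk k)) = length (fst (Bk k'))" by simp
  then show "k = k'" by (simp add: Bk_def)
qed

lemma Bk_nth1: "fst (Bk k) ! 1 = S" by (simp add: Bk_def nth_append)
lemma Bk_len: "3 \<le> length (fst (Bk k))" by (simp add: Bk_def)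

lemma supp:
  fixes p q \<gamma> :: real
  assumes "0 < q" "q < p" "p + q = 1" "0 \<le> \<gamma>" "\<gamma> \<le> 1" "c \<in> set_pmf (cycle_pmf p q \<gamma>)"
  shows "c \<in> Supp"
proof (rule ccontr)
  assume "c \<notin> Supp"
  then have "cycle_prob p q \<gamma> c = 0" using cycle_prob_other by (auto simp: Supp_def)
  then show False using assms pmf_cycle[OF assms(1-5)] by (simp add: set_pmf_iff)
qed

definition GG :: "nat \<Rightarrow> cycle stream \<Rightarrow> real" where
  "GG n1 s = indicator As (s !! 0) + indicator (Bk ` {..<n1 - 1}) (s !! 0) * indicator Cs (s !! 1)"

lemma Uh_G:
  assumes c0: "s !! 0 \<in> Supp" and c1: "s !! 1 \<in> Supp" and n1: "2 \<le> n1"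
  shows "real (Uh n1 s) = GG n1 s"
proof -
  have notB: "s !! 0 \<notin> Bk ` {..<n1 - 1}" if "length (fst (s !! 0)) < 3 \<or> fst (s !! 0) ! 1 = H"
    using that Bk_nth1 Bk_len by (metis imageE letter.distinct(1) not_le)
  consider "s !! 0 = ([H], False)" | "s !! 0 = ([S,H,S], False)" | b where "s !! 0 = ([S,H,H], b)"
    | v where "dyck v" "s !! 0 = SSc v"
    using c0 by (auto simp: Supp_def F4_def)
  then show ?thesis
  proof cases
    case 1
    then show ?thesis using Uh_H[OF 1] notB by (simp add: GG_def As_def)
  next
    case 2
    then show ?thesis using Uh_SHS[OF 2] notB n1 by (simp add: GG_def As_def)
  next
    case 3
    then show ?thesis using Uh_SHH[OF 3] notB n1 by (cases b) (simp_all add: GG_def As_def)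
  next
    case 4
    have "s !! 0 \<notin> As" using 4 by (auto simp: As_def SSc_def)
    then show ?thesis using Uh_SS[OF 4(2) 4(1) c1 n1] by (simp add: GG_def indicator_def)
  qed
qed

lemma emeasure_pmf_sum:
  fixes p q \<gamma> :: real
  assumes "0 < q" "q < p" "p + q = 1" "0 \<le> \<gamma>" "\<gamma> \<le> 1" "finite X"
  shows "emeasure (measure_pmf (cycle_pmf p q \<gamma>)) X = ennreal (\<Sum>c\<in>X. cycle_prob p q \<gamma> c)"
proof -
  have "emeasure (measure_pmf (cycle_pmf p q \<gamma>)) X = (\<Sum>c\<in>X. ennreal (pmf (cycle_pmf p q \<gamma>) c))"
    using emeasure_measure_pmf_finite[OF assms(6)] by simp
  also have "\<dots> = ennreal (\<Sum>c\<in>X. cycle_prob p q \<gamma> c)"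
    using pmf_cycle[OF assms(1-5)] cycle_prob_nonneg[OF assms(1,2,4,5)]
    by (subst sum_ennreal) auto
  finally show ?thesis .
qed

theorem proposition14:
  fixes p q \<gamma> :: real and n1 :: nat
  assumes "0 < q" "q < p" "p + q = 1" "0 \<le> \<gamma>" "\<gamma> \<le> 1" "2 \<le> n1"
  shows "integral\<^sup>L (stream_space (measure_pmf (cycle_pmf p q \<gamma>))) (\<lambda>s. real (Uh n1 s))
     = p^2 * q + (p + (1 - \<gamma>) * p^2 * q) * p * q^2 * ((1 - (p*q)^(n1 - 1)) / (1 - p*q))"
proof -
  note A = assms(1-5)
  have p: "0 < p" using assms by simp
  define P where "P = cycle_pmf p q \<gamma>"
  define M where "M = measure_pmf P"
  define SS where "SS = stream_space M"
  interpret M: prob_space M unfolding M_def by (rule prob_space_measure_pmf)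
  interpret SS: prob_space SS unfolding SS_def by (rule M.prob_space_stream_space)
  define Bs where "Bs = Bk ` {..<n1 - 1}"
  let ?iA = "\<lambda>x. indicator As x :: ennreal"
  let ?iB = "\<lambda>x. indicator Bs x :: ennreal"
  let ?iC = "\<lambda>x. indicator Cs x :: ennreal"
  have AE: "AE s in SS. real (Uh n1 s) = GG n1 s"
  proof -
    have "AE s in SS. stream_all (\<lambda>x. x \<in> Supp) s"
      unfolding SS_def
    proof (rule M.AE_stream_all)
      show "Measurable.pred M (\<lambda>x. x \<in> Supp)" by (simp add: M_def)
      show "AE x in M. x \<in> Supp" unfolding M_def P_def AE_measure_pmf_iff using supp[OF A] by blast
    qed
    then show ?thesis
    proof (rule eventually_mono)
      fix s assume "stream_all (\<lambda>x. x \<in> Supp) s"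
      then have "s !! 0 \<in> Supp" "s !! 1 \<in> Supp" unfolding stream_all_def by blast+
      then show "real (Uh n1 s) = GG n1 s" by (rule Uh_G) (rule assms(6))
    qed
  qed
  have measA: "(\<lambda>s. f (s !! k)) \<in> borel_measurable SS" for f :: "cycle \<Rightarrow> real" and k
    unfolding SS_def by (rule measurable_compose[OF measurable_snth]) (simp add: M_def)
  have measG: "GG n1 \<in> borel_measurable SS"
    unfolding GG_def[abs_def]
    by (intro borel_measurable_add borel_measurable_times measA)
  have measU: "(\<lambda>s. real (Uh n1 s)) \<in> borel_measurable SS"
    unfolding SS_def M_def by (rule Uh_meas)
  have "integral\<^sup>L SS (\<lambda>s. real (Uh n1 s)) = integral\<^sup>L SS (GG n1)"
    by (rule integral_cong_AE[OF measU measG AE])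
  have sums: "emeasure M As = ennreal (p^2 * q)"
     "emeasure M Cs = ennreal (p + p^2 * q * (1 - \<gamma>))"
     "emeasure M Bs = ennreal (q^2 * p * ((1 - (p*q)^(n1 - 1)) / (1 - p*q)))"
  proof -
    show "emeasure M As = ennreal (p^2 * q)"
      unfolding M_def P_def using emeasure_pmf_sum[OF A, of As]
      by (simp add: As_def cycle_prob_pts algebra_simps)
    show "emeasure M Cs = ennreal (p + p^2 * q * (1 - \<gamma>))"
      unfolding M_def P_def using emeasure_pmf_sum[OF A, of Cs]
      by (simp add: Cs_def cycle_prob_pts)
    have "(\<Sum>c\<in>Bs. cycle_prob p q \<gamma> c) = (\<Sum>k<n1 - 1. cycle_prob p q \<gamma> (Bk k))"
      unfolding Bs_def by (rule sum.reindex[unfolded comp_def]) (rule inj_on_subset[OF inj_Bk], simp)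
    also have "\<dots> = (\<Sum>k<n1 - 1. q^2 * p * (p*q)^k)" by (simp add: cycle_prob_Bk)
    also have "\<dots> = q^2 * p * (\<Sum>k<n1 - 1. (p*q)^k)" by (simp add: sum_distrib_left)
    also have "(\<Sum>k<n1 - 1. (p*q)^k) = (1 - (p*q)^(n1 - 1)) / (1 - p*q)"
    proof -
      have "p * q \<noteq> 1" using A p by (smt (verit) mult_less_cancel_left2)
      then show ?thesis by (simp add: sum_gp_strict)
    qed
    finally show "emeasure M Bs = ennreal (q^2 * p * ((1 - (p*q)^(n1 - 1)) / (1 - p*q)))"
      unfolding M_def P_def using emeasure_pmf_sum[OF A, of Bs] by (simp add: Bs_def)
  qed
  have eGG: "ennreal (GG n1 s) = ?iA (shd s) + ?iB (shd s) * ?iC (shd (stl s))" for s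
    by (simp add: GG_def Bs_def indicator_def)
  have measE: "(\<lambda>s. ?iA (shd s) + ?iB (shd s) * ?iC (shd (stl s))) \<in> borel_measurable SS"
    unfolding SS_def M_def by measurable
  have eC: "(\<integral>\<^sup>+X. ?iC (shd X) \<partial>SS) = emeasure M Cs"
  proof -
    have "(\<integral>\<^sup>+X. ?iC (shd X) \<partial>SS) = (\<integral>\<^sup>+y. (\<integral>\<^sup>+X. ?iC (shd (y ## X)) \<partial>SS) \<partial>M)"
      unfolding SS_def by (rule M.nn_integral_stream_space) (simp add: M_def)
    also have "\<dots> = (\<integral>\<^sup>+y. ?iC y \<partial>M)"
      by (simp add: SS.emeasure_space_1)
    also have "\<dots> = emeasure M Cs" by (simp add: M_def)
    finally show ?thesis .
  qed
  have "(\<integral>\<^sup>+s. ennreal (GG n1 s) \<partial>SS) = (\<integral>\<^sup>+s. ?iA (shd s) + ?iB (shd s) * ?iC (shd (stl s)) \<partial>SS)"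
    by (simp only: eGG)
  also have "\<dots> = (\<integral>\<^sup>+x. (\<integral>\<^sup>+X. ?iA x + ?iB x * ?iC (shd X) \<partial>SS) \<partial>M)"
    unfolding SS_def using M.nn_integral_stream_space[OF measE[unfolded SS_def]] by simp
  also have "\<dots> = (\<integral>\<^sup>+x. ?iA x + ?iB x * emeasure M Cs \<partial>M)"
  proof (rule nn_integral_cong)
    fix x
    have "(\<integral>\<^sup>+X. ?iA x + ?iB x * ?iC (shd X) \<partial>SS) = (\<integral>\<^sup>+X. ?iA x \<partial>SS) + (\<integral>\<^sup>+X. ?iB x * ?iC (shd X) \<partial>SS)"
      by (rule nn_integral_add) (simp_all add: SS_def M_def)
    also have "(\<integral>\<^sup>+X. ?iB x * ?iC (shd X) \<partial>SS) = ?iB x * (\<integral>\<^sup>+X. ?iC (shd X) \<partial>SS)"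
      by (rule nn_integral_cmult) (simp add: SS_def M_def)
    also have "(\<integral>\<^sup>+X. ?iA x \<partial>SS) = ?iA x" by (simp add: SS.emeasure_space_1)
    finally show "(\<integral>\<^sup>+X. ?iA x + ?iB x * ?iC (shd X) \<partial>SS) = ?iA x + ?iB x * emeasure M Cs"
      using eC by simp
  qed
  also have "\<dots> = (\<integral>\<^sup>+x. ?iA x \<partial>M) + (\<integral>\<^sup>+x. ?iB x * emeasure M Cs \<partial>M)"
    by (rule nn_integral_add) (simp_all add: M_def)
  also have "(\<integral>\<^sup>+x. ?iB x * emeasure M Cs \<partial>M) = emeasure M Bs * emeasure M Cs"
    by (subst nn_integral_multc) (simp_all add: M_def)
  also have "(\<integral>\<^sup>+x. ?iA x \<partial>M) = emeasure M As" by (simp add: M_def)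
  finally have nn: "(\<integral>\<^sup>+s. ennreal (GG n1 s) \<partial>SS) =
     ennreal (p^2 * q) + ennreal (q^2 * p * ((1 - (p*q)^(n1 - 1)) / (1 - p*q))) * ennreal (p + p^2 * q * (1 - \<gamma>))"
    unfolding sums .
  have pq1: "p * q < 1" using A p by (smt (verit) mult_less_cancel_left2)
  have geo0: "0 \<le> (1 - (p*q)^(n1 - 1)) / (1 - p*q)"
  proof -
    have "(p*q)^(n1 - 1) \<le> 1" using pq1 p A by (intro power_le_one) auto
    then show ?thesis using pq1 by simp
  qed
  have B0: "0 \<le> q^2 * p * ((1 - (p*q)^(n1 - 1)) / (1 - p*q))"
    by (rule mult_nonneg_nonneg[OF _ geo0]) (use A p in simp)
  have C0: "0 \<le> p + p^2 * q * (1 - \<gamma>)" using A p by simp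
  have A0: "0 \<le> p^2 * q" using A p by simp
  define val where "val = p^2 * q + (q^2 * p * ((1 - (p*q)^(n1 - 1)) / (1 - p*q))) * (p + p^2 * q * (1 - \<gamma>))"
  have nn': "(\<integral>\<^sup>+s. ennreal (GG n1 s) \<partial>SS) = ennreal val"
    unfolding nn val_def by (rule ennreal_comb[OF A0 B0 C0])
  have GG0: "AE s in SS. 0 \<le> GG n1 s" by (simp add: GG_def)
  have val0: "0 \<le> val" unfolding val_def by (rule add_nonneg_nonneg[OF A0 mult_nonneg_nonneg[OF B0 C0]])
  have "integral\<^sup>L SS (GG n1) = val"
    using nn_integral_eq_integrable[OF measG GG0 val0] nn' by simp
  have final: "val = p^2 * q + (p + (1 - \<gamma>) * p^2 * q) * p * q^2 * ((1 - (p*q)^(n1 - 1)) / (1 - p*q))"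
  proof -
    have gen: "\<And>g::real. p^2 * q + (q^2 * p * g) * (p + p^2 * q * (1 - \<gamma>)) = p^2 * q + (p + (1 - \<gamma>) * p^2 * q) * p * q^2 * g"
      by (simp add: algebra_simps)
    show ?thesis unfolding val_def by (rule gen)
  qed
  show ?thesis
    using \<open>integral\<^sup>L SS (\<lambda>s. real (Uh n1 s)) = integral\<^sup>L SS (GG n1)\<close> \<open>integral\<^sup>L SS (GG n1) = val\<close> final
    by (simp add: SS_def M_def P_def)
qed

end
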